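(* Every finitely generated group with infinitely many ends is not presentable by a product.
   Context: An infinite group $\Gamma$ is not presentable by a product if for every homomorphism $\varphi\colon \Gamma_1\times\Gamma_2\to\Gamma$ whose image has finite index in $\Gamma$, at least one of $\varphi(\Gamma_1)$, $\varphi(\Gamma_2)$ is finite. The ends of a finitely generated group are the ends of a Cayley graph with respect to a finite generating set. *)

theory Defs
  imports "HOL-Algebra.Algebra"
begin

definition fin_gen_group :: "('a, 'm) monoid_scheme \<Rightarrow> bool" where
  "fin_gen_group G \<longleftrightarrow> group G \<and>
     (\<exists>S. finite S \<and> S \<subseteq> carrier G \<and> generate G S = carrier G)"

definition cayley_adj :: "('a, 'm) monoid_scheme \<Rightarrow> 'a set \<Rightarrow> 'a \<Rightarrow> 'a \<Rightarrow> bool" where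
  "cayley_adj G S g h \<longleftrightarrow> g \<in> carrier G \<and> h \<in> carrier G \<and>
     (\<exists>s\<in>S. h = g \<otimes>\<^bsub>G\<^esub> s \<or> g = h \<otimes>\<^bsub>G\<^esub> s)"

definition cayley_ray :: "('a, 'm) monoid_scheme \<Rightarrow> 'a set \<Rightarrow> (nat \<Rightarrow> 'a) \<Rightarrow> bool" where
  "cayley_ray G S r \<longleftrightarrow> inj r \<and> (\<forall>n. cayley_adj G S (r n) (r (Suc n)))"

definition conn_avoiding :: "('a, 'm) monoid_scheme \<Rightarrow> 'a set \<Rightarrow> 'a set \<Rightarrow> 'a \<Rightarrow> 'a \<Rightarrow> bool" where
  "conn_avoiding G S K x y \<longleftrightarrow> x \<in> carrier G - K \<and> y \<in> carrier G - K \<and>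
     (\<lambda>a b. cayley_adj G S a b \<and> a \<notin> K \<and> b \<notin> K)\<^sup>*\<^sup>* x y"

definition ray_equiv :: "('a, 'm) monoid_scheme \<Rightarrow> 'a set \<Rightarrow> ((nat \<Rightarrow> 'a) \<times> (nat \<Rightarrow> 'a)) set" where
  "ray_equiv G S = {(r1, r2). cayley_ray G S r1 \<and> cayley_ray G S r2 \<and>
     (\<forall>K. finite K \<longrightarrow> (\<exists>m n. \<forall>i\<ge>m. \<forall>j\<ge>n. conn_avoiding G S K (r1 i) (r2 j)))}"

definition cayley_ends :: "('a, 'm) monoid_scheme \<Rightarrow> 'a set \<Rightarrow> (nat \<Rightarrow> 'a) set set" where
  "cayley_ends G S = {r. cayley_ray G S r} // ray_equiv G S"

text \<open>G has infinitely many ends: for a finite generating set S, the Cayley graph has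
  infinitely many ends (this number does not depend on S).\<close>
definition infinitely_many_ends :: "('a, 'm) monoid_scheme \<Rightarrow> bool" where
  "infinitely_many_ends G \<longleftrightarrow>
     (\<exists>S. finite S \<and> S \<subseteq> carrier G \<and> generate G S = carrier G \<and> infinite (cayley_ends G S))"

definition no_product_presentation ::
  "('a, 'm) monoid_scheme \<Rightarrow> ('b, 'n) monoid_scheme \<Rightarrow> ('c, 'k) monoid_scheme \<Rightarrow> bool" where
  "no_product_presentation G H1 H2 \<longleftrightarrow>
     (\<forall>\<phi> \<in> hom (H1 \<times>\<times> H2) G.
        finite (rcosets\<^bsub>G\<^esub> (\<phi> ` carrier (H1 \<times>\<times> H2))) \<longrightarrow>
        finite (\<phi> ` (carrier H1 \<times> {\<one>\<^bsub>H2\<^esub>})) \<or> finite (\<phi> ` ({\<one>\<^bsub>H1\<^esub>} \<times> carrier H2)))"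

end

theory Submission
  imports Defs
begin



locale cay = group G for G (structure) +
  fixes S assumes S_sub: "S \<subseteq> carrier G" and gen: "generate G S = carrier G"
begin

abbreviation "adj \<equiv> cayley_adj G S"
abbreviation "conn \<equiv> conn_avoiding G S"

lemma adj_sym: "adj x y = adj y x"
  unfolding cayley_adj_def by blast

lemma adj_carrier: "adj x y \<Longrightarrow> x \<in> carrier G \<and> y \<in> carrier G"
  unfolding cayley_adj_def by blast

lemma conn_carrier: "conn K x y \<Longrightarrow> x \<in> carrier G \<and> y \<in> carrier G \<and> x \<notin> K \<and> y \<notin> K"
  unfolding conn_avoiding_def by blast

lemma conn_refl: "x \<in> carrier G \<Longrightarrow> x \<notin> K \<Longrightarrow> conn K x x"
  unfolding conn_avoiding_def by blast

lemma conn_step: "adj x y \<Longrightarrow> x \<notin> K \<Longrightarrow> y \<notin> K \<Longrightarrow> conn K x y"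
  unfolding conn_avoiding_def using adj_carrier by (auto intro: r_into_rtranclp)

lemma conn_trans: "conn K x y \<Longrightarrow> conn K y z \<Longrightarrow> conn K x z"
  unfolding conn_avoiding_def by (auto intro: rtranclp_trans)

lemma conn_sym: "conn K x y \<Longrightarrow> conn K y x"
proof -
  let ?R = "\<lambda>a b. adj a b \<and> a \<notin> K \<and> b \<notin> K"
  have "?R\<^sup>*\<^sup>* x y \<Longrightarrow> ?R\<^sup>*\<^sup>* y x" for x y
  proof (induction rule: rtranclp_induct)
    case base thus ?case by simp
  next
    case (step y z)
    have "?R z y" using step(2) adj_sym by blast
    thus ?case by (rule converse_rtranclp_into_rtranclp[of ?R, OF _ step(3)])
  qed
  thus "conn K x y \<Longrightarrow> conn K y x" unfolding conn_avoiding_def by blast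
qed

lemma conn_mono:
  assumes KK: "K \<inter> carrier G \<subseteq> K2" and h: "conn K2 x y" shows "conn K x y"
proof -
  let ?R2 = "\<lambda>a b. adj a b \<and> a \<notin> K2 \<and> b \<notin> K2"
  let ?R = "\<lambda>a b. adj a b \<and> a \<notin> K \<and> b \<notin> K"
  have "?R\<^sup>*\<^sup>* x y" if "?R2\<^sup>*\<^sup>* x y" for y using that
  proof (induction rule: rtranclp_induct)
    case base thus ?case by simp
  next
    case (step y z)
    have "?R y z" using step(2) KK adj_carrier by blast
    thus ?case by (rule rtranclp.rtrancl_into_rtrancl[of ?R, OF step(3)])
  qed
  thus ?thesis using h KK unfolding conn_avoiding_def by blast
qed

lemma conn_restrict:
  assumes "conn K v y" and "\<And>z. conn K v z \<Longrightarrow> z \<notin> K2"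
  shows "conn K2 v y"
proof -
  let ?R = "\<lambda>a b. adj a b \<and> a \<notin> K \<and> b \<notin> K"
  have v: "v \<in> carrier G" "v \<notin> K" using assms(1) conn_carrier by auto
  have "?R\<^sup>*\<^sup>* v y \<Longrightarrow> conn K2 v y" for y
  proof (induction rule: rtranclp_induct)
    case base
    have "conn K v v" using v conn_refl by auto
    thus ?case using assms(2) v conn_refl by auto
  next
    case (step y z)
    have Rvz: "?R\<^sup>*\<^sup>* v z" by (rule rtranclp.rtrancl_into_rtrancl[of ?R, OF step(1) step(2)])
    have cz: "conn K v z" using Rvz v step(2) adj_carrier unfolding conn_avoiding_def by blast
    have cy: "conn K v y" using step(1) v step(2) adj_carrier unfolding conn_avoiding_def by blast
    have "conn K2 y z" using step(2) assms(2)[OF cz] assms(2)[OF cy] conn_step by blast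
    thus ?case using step(3) conn_trans by blast
  qed
  thus ?thesis using assms(1) unfolding conn_avoiding_def by blast
qed

lemma adj_translate:
  assumes c: "c \<in> carrier G" and h: "adj x y" shows "adj (c \<otimes> x) (c \<otimes> y)"
proof -
  obtain s where s: "s \<in> S" "y = x \<otimes> s \<or> x = y \<otimes> s" and xy: "x \<in> carrier G" "y \<in> carrier G"
    using h unfolding cayley_adj_def by blast
  have sc: "s \<in> carrier G" using s S_sub by auto
  have "c \<otimes> y = (c \<otimes> x) \<otimes> s \<or> c \<otimes> x = (c \<otimes> y) \<otimes> s"
    using s(2) c xy sc by (auto simp: m_assoc)
  thus ?thesis unfolding cayley_adj_def using c xy s(1) by blast
qed

lemma conn_translate:
  assumes c: "c \<in> carrier G" and K: "K \<subseteq> carrier G" and h: "conn K x y"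
  shows "conn ((\<otimes>) c ` K) (c \<otimes> x) (c \<otimes> y)"
proof -
  let ?R = "\<lambda>a b. adj a b \<and> a \<notin> K \<and> b \<notin> K"
  let ?R2 = "\<lambda>a b. adj a b \<and> a \<notin> (\<otimes>) c ` K \<and> b \<notin> (\<otimes>) c ` K"
  have nk: "a \<in> carrier G \<Longrightarrow> a \<notin> K \<Longrightarrow> c \<otimes> a \<notin> (\<otimes>) c ` K" for a
    using c K by (auto simp: subset_iff)
  have "?R\<^sup>*\<^sup>* x y \<Longrightarrow> ?R2\<^sup>*\<^sup>* (c \<otimes> x) (c \<otimes> y)" for y
  proof (induction rule: rtranclp_induct)
    case base thus ?case by simp
  next
    case (step y z)
    have "?R2 (c \<otimes> y) (c \<otimes> z)" using step(2) adj_translate[OF c] nk adj_carrier by blast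
    thus ?case by (rule rtranclp.rtrancl_into_rtrancl[of ?R2, OF step(3)])
  qed
  thus ?thesis using h c nk unfolding conn_avoiding_def by auto
qed

lemma right_mult_conn:
  assumes "finite K" and "w \<in> carrier G"
  shows "\<exists>F. finite F \<and> (\<forall>u\<in>carrier G - F. conn K u (u \<otimes> w))"
proof -
  have "w \<in> generate G S" using gen assms by simp
  thus ?thesis
  proof (induction rule: generate.induct)
    case one
    show ?case by (rule exI[of _ K]) (auto simp: assms conn_refl)
  next
    case (incl s)
    have s: "s \<in> carrier G" using incl S_sub by auto
    show ?case
    proof (intro exI[of _ "K \<union> (\<lambda>k. k \<otimes> inv s) ` K"] conjI ballI)
      show "finite (K \<union> (\<lambda>k. k \<otimes> inv s) ` K)" using assms by simp
      fix u assume "u \<in> carrier G - (K \<union> (\<lambda>k. k \<otimes> inv s) ` K)"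
      hence u: "u \<in> carrier G" "u \<notin> K \<union> (\<lambda>k. k \<otimes> inv s) ` K" by auto
      have "u \<otimes> s \<notin> K"
      proof
        assume "u \<otimes> s \<in> K"
        moreover have "u = (u \<otimes> s) \<otimes> inv s" using u s by (simp add: m_assoc)
        ultimately show False using u by blast
      qed
      moreover have "adj u (u \<otimes> s)" unfolding cayley_adj_def using u s incl by auto
      ultimately show "conn K u (u \<otimes> s)" using u conn_step by blast
    qed
  next
    case (inv s)
    have s: "s \<in> carrier G" using inv S_sub by auto
    show ?case
    proof (intro exI[of _ "K \<union> (\<lambda>k. k \<otimes> s) ` K"] conjI ballI)
      show "finite (K \<union> (\<lambda>k. k \<otimes> s) ` K)" using assms by simp
      fix u assume "u \<in> carrier G - (K \<union> (\<lambda>k. k \<otimes> s) ` K)"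
      hence u: "u \<in> carrier G" "u \<notin> K \<union> (\<lambda>k. k \<otimes> s) ` K" by auto
      have "u \<otimes> inv s \<notin> K"
      proof
        assume "u \<otimes> inv s \<in> K"
        moreover have "u = (u \<otimes> inv s) \<otimes> s" using u s by (simp add: m_assoc)
        ultimately show False using u by blast
      qed
      moreover have "adj u (u \<otimes> inv s)" unfolding cayley_adj_def using u s inv
        by (intro conjI bexI[of _ s]) (auto simp: m_assoc)
      ultimately show "conn K u (u \<otimes> inv s)" using u conn_step by blast
    qed
  next
    case (eng w1 w2)
    obtain F1 where F1: "finite F1" "\<forall>u\<in>carrier G - F1. conn K u (u \<otimes> w1)" using eng by blast
    obtain F2 where F2: "finite F2" "\<forall>u\<in>carrier G - F2. conn K u (u \<otimes> w2)" using eng by blast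
    have w1: "w1 \<in> carrier G" "w2 \<in> carrier G" using eng gen by auto
    show ?case
    proof (intro exI[of _ "F1 \<union> (\<lambda>f. f \<otimes> inv w1) ` F2"] conjI ballI)
      show "finite (F1 \<union> (\<lambda>f. f \<otimes> inv w1) ` F2)" using F1 F2 by simp
      fix u assume "u \<in> carrier G - (F1 \<union> (\<lambda>f. f \<otimes> inv w1) ` F2)"
      hence u: "u \<in> carrier G" "u \<notin> F1 \<union> (\<lambda>f. f \<otimes> inv w1) ` F2" by auto
      have "u \<otimes> w1 \<notin> F2"
      proof
        assume "u \<otimes> w1 \<in> F2"
        moreover have "u = (u \<otimes> w1) \<otimes> inv w1" using u w1 by (simp add: m_assoc)
        ultimately show False using u by blast
      qed
      hence "conn K (u \<otimes> w1) (u \<otimes> w1 \<otimes> w2)" using F2 u w1 by auto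
      moreover have "conn K u (u \<otimes> w1)" using F1 u by auto
      ultimately show "conn K u (u \<otimes> (w1 \<otimes> w2))" using conn_trans u w1 by (simp add: m_assoc)
    qed
  qed
qed

end



lemma rtranclp_exit:
  assumes "R\<^sup>*\<^sup>* a b" "P a" "\<not> P b" shows "\<exists>x y. R x y \<and> P x \<and> \<not> P y"
  using assms by (induction rule: rtranclp_induct) auto

context cay begin

definition icon :: "'a set \<Rightarrow> bool" where
  "icon Q \<longleftrightarrow> Q \<subseteq> carrier G \<and> (\<forall>x\<in>Q. \<forall>y\<in>Q. (\<lambda>a b. adj a b \<and> a \<in> Q \<and> b \<in> Q)\<^sup>*\<^sup>* x y)"

lemma icon_translate:
  assumes Q: "icon Q" and c: "c \<in> carrier G" shows "icon ((\<otimes>) c ` Q)"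
proof -
  let ?Q = "(\<otimes>) c ` Q"
  let ?R = "\<lambda>a b. adj a b \<and> a \<in> Q \<and> b \<in> Q"
  let ?R2 = "\<lambda>a b. adj a b \<and> a \<in> ?Q \<and> b \<in> ?Q"
  have "?R\<^sup>*\<^sup>* x y \<Longrightarrow> ?R2\<^sup>*\<^sup>* (c \<otimes> x) (c \<otimes> y)" for x y
  proof (induction rule: rtranclp_induct)
    case base thus ?case by simp
  next
    case (step y z)
    have "?R2 (c \<otimes> y) (c \<otimes> z)" using step(2) adj_translate[OF c] by blast
    thus ?case by (rule rtranclp.rtrancl_into_rtrancl[of ?R2, OF step(3)])
  qed
  thus ?thesis using Q c unfolding icon_def by auto
qed

lemma icon_union:
  assumes "icon Q1" "icon Q2" "z \<in> Q1" "z \<in> Q2" shows "icon (Q1 \<union> Q2)"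
proof -
  let ?R = "\<lambda>Q a b. adj a b \<and> a \<in> Q \<and> b \<in> Q"
  have mono: "(?R Q)\<^sup>*\<^sup>* x y \<Longrightarrow> Q \<subseteq> Q' \<Longrightarrow> (?R Q')\<^sup>*\<^sup>* x y" for Q Q' x y
    by (erule rtranclp_mono[THEN predicate2D, rotated]) auto
  have 1: "(?R Q1)\<^sup>*\<^sup>* x y" if "x \<in> Q1" "y \<in> Q1" for x y using assms that unfolding icon_def by blast
  have 2: "(?R Q2)\<^sup>*\<^sup>* x y" if "x \<in> Q2" "y \<in> Q2" for x y using assms that unfolding icon_def by blast
  have "(?R (Q1 \<union> Q2))\<^sup>*\<^sup>* x y" if "x \<in> Q1 \<union> Q2" "y \<in> Q1 \<union> Q2" for x y
  proof -
    have a: "(?R (Q1 \<union> Q2))\<^sup>*\<^sup>* x z"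
    proof (cases "x \<in> Q1")
      case True thus ?thesis using 1[of x z] assms(3) mono[of Q1 x z "Q1 \<union> Q2"] by simp
    next
      case False thus ?thesis using that(1) 2[of x z] assms(4) mono[of Q2 x z "Q1 \<union> Q2"] by simp
    qed
    have b: "(?R (Q1 \<union> Q2))\<^sup>*\<^sup>* z y"
    proof (cases "y \<in> Q1")
      case True thus ?thesis using 1[of z y] assms(3) mono[of Q1 z y "Q1 \<union> Q2"] by simp
    next
      case False thus ?thesis using that(2) 2[of z y] assms(4) mono[of Q2 z y "Q1 \<union> Q2"] by simp
    qed
    show ?thesis using a b by (rule rtranclp_trans)
  qed
  thus ?thesis using assms unfolding icon_def by auto
qed

lemma icon_single: "x \<in> carrier G \<Longrightarrow> icon {x}"
  unfolding icon_def by auto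

lemma icon_pair: "adj x y \<Longrightarrow> icon {x, y}"
proof -
  assume a: "adj x y"
  let ?R = "\<lambda>a b. adj a b \<and> a \<in> {x,y} \<and> b \<in> {x,y}"
  have "?R x y" "?R y x" using a adj_sym by auto
  hence "?R\<^sup>*\<^sup>* x y" "?R\<^sup>*\<^sup>* y x" by auto
  thus ?thesis using a adj_carrier unfolding icon_def by auto
qed

lemma icon_exists:
  assumes "g \<in> carrier G" shows "\<exists>Q. finite Q \<and> icon Q \<and> \<one> \<in> Q \<and> g \<in> Q"
proof -
  have "g \<in> generate G S" using gen assms by simp
  thus ?thesis
  proof (induction rule: generate.induct)
    case one thus ?case using icon_single[of \<one>] by (intro exI[of _ "{\<one>}"]) auto
  next
    case (incl s)
    have "adj \<one> s" unfolding cayley_adj_def using incl S_sub by (intro conjI bexI[of _ s]) auto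
    thus ?case using icon_pair by (intro exI[of _ "{\<one>, s}"]) auto
  next
    case (inv s)
    have s: "s \<in> carrier G" using inv S_sub by auto
    have "adj \<one> (inv s)" unfolding cayley_adj_def using inv s by (intro conjI bexI[of _ s]) auto
    thus ?case using icon_pair by (intro exI[of _ "{\<one>, inv s}"]) auto
  next
    case (eng g1 g2)
    obtain Q1 where Q1: "finite Q1" "icon Q1" "\<one> \<in> Q1" "g1 \<in> Q1" using eng by blast
    obtain Q2 where Q2: "finite Q2" "icon Q2" "\<one> \<in> Q2" "g2 \<in> Q2" using eng by blast
    have g1: "g1 \<in> carrier G" using eng gen by auto
    have "icon ((\<otimes>) g1 ` Q2)" using icon_translate Q2 g1 by auto
    moreover have "g1 \<in> (\<otimes>) g1 ` Q2" using Q2(3) g1 by (auto intro: image_eqI[of _ _ \<one>])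
    ultimately have "icon (Q1 \<union> (\<otimes>) g1 ` Q2)" using icon_union Q1 by blast
    thus ?case using Q1 Q2 by (intro exI[of _ "Q1 \<union> (\<otimes>) g1 ` Q2"]) auto
  qed
qed

lemma conn_hull:
  assumes "finite K" "K \<subseteq> carrier G"
  shows "\<exists>K'. finite K' \<and> icon K' \<and> \<one> \<in> K' \<and> K \<subseteq> K'"
  using assms
proof (induction K rule: finite_induct)
  case empty thus ?case using icon_single[of \<one>] by (intro exI[of _ "{\<one>}"]) auto
next
  case (insert k K)
  obtain K' where K': "finite K'" "icon K'" "\<one> \<in> K'" "K \<subseteq> K'" using insert by auto
  obtain Q where Q: "finite Q" "icon Q" "\<one> \<in> Q" "k \<in> Q" using icon_exists[of k] insert.prems by auto
  have "icon (K' \<union> Q)" using icon_union K' Q by blast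
  thus ?case using K' Q by (intro exI[of _ "K' \<union> Q"]) auto
qed

lemma connected: assumes "g \<in> carrier G" shows "adj\<^sup>*\<^sup>* g \<one>"
proof -
  obtain Q where Q: "icon Q" "\<one> \<in> Q" "g \<in> Q" using icon_exists assms by blast
  hence "(\<lambda>a b. adj a b \<and> a \<in> Q \<and> b \<in> Q)\<^sup>*\<^sup>* g \<one>" unfolding icon_def by blast
  thus ?thesis by (rule rtranclp_mono[THEN predicate2D, rotated]) auto
qed

lemma icon_conn:
  assumes "icon M" "M \<inter> K = {}" "x \<in> M" "y \<in> M" shows "conn K x y"
proof -
  have "(\<lambda>a b. adj a b \<and> a \<in> M \<and> b \<in> M)\<^sup>*\<^sup>* x y" using assms unfolding icon_def by blast
  hence "(\<lambda>a b. adj a b \<and> a \<notin> K \<and> b \<notin> K)\<^sup>*\<^sup>* x y"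
    by (rule rtranclp_mono[THEN predicate2D, rotated]) (use assms(2) in auto)
  thus ?thesis using assms unfolding conn_avoiding_def icon_def by auto
qed

lemma ray_carrier: "cayley_ray G S r \<Longrightarrow> r n \<in> carrier G"
  unfolding cayley_ray_def cayley_adj_def by blast

lemma ray_tail:
  assumes r: "cayley_ray G S r" and K: "finite K"
  shows "\<exists>m. \<forall>n\<ge>m. r n \<notin> K \<and> conn K (r m) (r n)"
proof -
  have "finite {n. r n \<in> K}" using r K unfolding cayley_ray_def
    by (metis finite_vimageI vimage_def)
  then obtain m where m: "\<forall>n\<in>{n. r n \<in> K}. n < m" using finite_nat_set_iff_bounded by blast
  have nk: "n \<ge> m \<Longrightarrow> r n \<notin> K" for n using m by force
  have "n \<ge> m \<Longrightarrow> conn K (r m) (r n)" for n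
  proof (induction n rule: dec_induct)
    case base thus ?case using conn_refl ray_carrier[OF r] nk by auto
  next
    case (step n)
    have "conn K (r n) (r (Suc n))" using r step nk unfolding cayley_ray_def
      by (intro conn_step) auto
    thus ?case using step conn_trans by blast
  qed
  thus ?thesis using nk by blast
qed

lemma ray_equiv_sym: assumes "(r1, r2) \<in> ray_equiv G S" shows "(r2, r1) \<in> ray_equiv G S"
proof -
  have "\<exists>m n. \<forall>i\<ge>m. \<forall>j\<ge>n. conn K (r2 i) (r1 j)" if K: "finite K" for K
  proof -
    obtain m n where "\<forall>i\<ge>m. \<forall>j\<ge>n. conn K (r1 i) (r2 j)" using assms K unfolding ray_equiv_def by blast
    hence "\<forall>i\<ge>n. \<forall>j\<ge>m. conn K (r2 i) (r1 j)" using conn_sym by blast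
    thus ?thesis by blast
  qed
  thus ?thesis using assms unfolding ray_equiv_def by blast
qed

lemma ray_equiv_trans:
  assumes "(r1, r2) \<in> ray_equiv G S" "(r2, r3) \<in> ray_equiv G S"
  shows "(r1, r3) \<in> ray_equiv G S"
proof -
  have rays: "cayley_ray G S r1" "cayley_ray G S r3" using assms unfolding ray_equiv_def by auto
  have "\<exists>m n. \<forall>i\<ge>m. \<forall>j\<ge>n. conn K (r1 i) (r3 j)" if K: "finite K" for K
  proof -
    obtain m1 n1 where 1: "\<forall>i\<ge>m1. \<forall>j\<ge>n1. conn K (r1 i) (r2 j)" using assms(1) K unfolding ray_equiv_def by blast
    obtain m2 n2 where 2: "\<forall>i\<ge>m2. \<forall>j\<ge>n2. conn K (r2 i) (r3 j)" using assms(2) K unfolding ray_equiv_def by blast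
    have "\<forall>i\<ge>m1. \<forall>j\<ge>n2. conn K (r1 i) (r3 j)"
    proof (intro allI impI)
      fix i j assume "i \<ge> m1" "j \<ge> n2"
      thus "conn K (r1 i) (r3 j)" using 1[rule_format, of i "max n1 m2"] 2[rule_format, of "max n1 m2" j]
        conn_trans by auto
    qed
    thus ?thesis by blast
  qed
  thus ?thesis using rays unfolding ray_equiv_def by blast
qed

lemma class_eq: assumes "(r1, r2) \<in> ray_equiv G S"
  shows "ray_equiv G S `` {r1} = ray_equiv G S `` {r2}"
proof -
  have "(r1, x) \<in> ray_equiv G S \<longleftrightarrow> (r2, x) \<in> ray_equiv G S" for x
    using ray_equiv_trans[OF ray_equiv_sym[OF assms]] ray_equiv_trans[OF assms] by blast
  thus ?thesis by auto
qed

lemma no_fixed_comp: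
  assumes K: "icon K" "\<one> \<in> K" and c: "c \<in> carrier G"
    and disj: "\<And>k1 k2. k1 \<in> K \<Longrightarrow> k2 \<in> K \<Longrightarrow> c \<otimes> k2 \<noteq> k1"
    and u: "conn K v u" "conn K v (c \<otimes> u)"
    and av1: "\<And>y. conn K v y \<Longrightarrow> y \<notin> (\<otimes>) c ` K"
    and av2: "\<And>y. conn K v y \<Longrightarrow> y \<notin> (\<otimes>) (inv c) ` K"
  shows False
proof -
  have Kc: "K \<subseteq> carrier G" using K unfolding icon_def by auto
  have v: "v \<in> carrier G" "v \<notin> K" using u conn_carrier by auto
  have uc: "u \<in> carrier G" using u conn_carrier by auto
  have ic: "inv c \<in> carrier G" using c by simp
  have cK: "(\<otimes>) c ` K \<subseteq> carrier G" using Kc c by auto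
  have icK: "(\<otimes>) (inv c) ` K \<subseteq> carrier G" using Kc c by auto
  have e1: "inv c \<otimes> (c \<otimes> x) = x" if "x \<in> K" for x using c that Kc by (auto simp: m_assoc[symmetric])
  have e2: "c \<otimes> (inv c \<otimes> x) = x" if "x \<in> K" for x using c that Kc by (auto simp: m_assoc[symmetric])
  have im1: "(\<otimes>) (inv c) ` ((\<otimes>) c ` K) = K"
    unfolding image_image using e1 by simp
  have im2: "(\<otimes>) c ` ((\<otimes>) (inv c) ` K) = K"
    unfolding image_image using e2 by simp
  have step1: "conn K v (inv c \<otimes> y)" if y: "conn K v y" for y
  proof -
    have a: "conn ((\<otimes>) c ` K) v y" using conn_restrict[OF y av1] .
    have b: "conn ((\<otimes>) c ` K) v (c \<otimes> u)" using conn_restrict[OF u(2) av1] .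
    have d: "conn ((\<otimes>) c ` K) (c \<otimes> v) (c \<otimes> u)" using conn_translate[OF c Kc u(1)] .
    have "conn ((\<otimes>) c ` K) (c \<otimes> v) y" using d conn_sym[OF b] a conn_trans by blast
    from conn_translate[OF ic cK this] show ?thesis using im1 c v by (simp add: m_assoc[symmetric])
  qed
  have step2: "conn K v (c \<otimes> y)" if y: "conn K v y" for y
  proof -
    have a: "conn ((\<otimes>) (inv c) ` K) v y" using conn_restrict[OF y av2] .
    have b: "conn ((\<otimes>) (inv c) ` K) v u" using conn_restrict[OF u(1) av2] .
    have d: "conn ((\<otimes>) (inv c) ` K) (inv c \<otimes> v) (inv c \<otimes> (c \<otimes> u))" using conn_translate[OF ic Kc u(2)] .
    hence d: "conn ((\<otimes>) (inv c) ` K) (inv c \<otimes> v) u" using c uc by (simp add: m_assoc[symmetric])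
    have "conn ((\<otimes>) (inv c) ` K) (inv c \<otimes> v) y" using d conn_sym[OF b] a conn_trans by blast
    from conn_translate[OF c icK this] show ?thesis using im2 c v by (simp add: m_assoc[symmetric])
  qed
  have out: "z \<in> K" if "conn K v x" "adj x z" "\<not> conn K v z" for x z
  proof (rule ccontr)
    assume "z \<notin> K"
    hence "conn K x z" using that conn_carrier conn_step by blast
    thus False using that conn_trans by blast
  qed
  have "\<not> conn K v \<one>" using K conn_carrier by blast
  then obtain x z where xz: "adj x z" "conn K v x" "\<not> conn K v z"
    using rtranclp_exit[of adj v \<one> "conn K v"] connected v conn_refl by blast
  have zK: "z \<in> K" using out xz by blast
  have xc: "x \<in> carrier G" "z \<in> carrier G" using xz adj_carrier by auto
  have 1: "conn K v (inv c \<otimes> x)" using step1 xz by blast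
  have 2: "adj (inv c \<otimes> x) (inv c \<otimes> z)" using adj_translate[OF ic xz(1)] .
  have 3: "\<not> conn K v (inv c \<otimes> z)"
  proof
    assume "conn K v (inv c \<otimes> z)"
    hence "conn K v (c \<otimes> (inv c \<otimes> z))" using step2 by blast
    thus False using xz c xc by (simp add: m_assoc[symmetric])
  qed
  have "inv c \<otimes> z \<in> K" using out 1 2 3 by blast
  moreover have "c \<otimes> (inv c \<otimes> z) = z" using c xc by (simp add: m_assoc[symmetric])
  ultimately show False using disj zK by blast
qed

end


context cay begin

lemma nonequiv:
  assumes "cayley_ray G S r1" "cayley_ray G S r2" "(r1, r2) \<notin> ray_equiv G S"
  shows "\<exists>K. finite K \<and> (\<forall>m n. \<exists>i\<ge>m. \<exists>j\<ge>n. \<not> conn K (r1 i) (r2 j))"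
  using assms unfolding ray_equiv_def by auto

lemma separated:
  assumes K: "finite K" "\<forall>m n. \<exists>i\<ge>m. \<exists>j\<ge>n. \<not> conn K (r1 i) (r2 j)"
    and KK: "K \<inter> carrier G \<subseteq> K'"
    and t1: "\<forall>n\<ge>m1. conn K' (r1 m1) (r1 n)" and t2: "\<forall>n\<ge>m2. conn K' (r2 m2) (r2 n)"
  shows "\<not> conn K' (r1 m1) (r2 m2)"
proof
  assume h: "conn K' (r1 m1) (r2 m2)"
  obtain i j where ij: "i \<ge> m1" "j \<ge> m2" "\<not> conn K (r1 i) (r2 j)" using K(2) by blast
  have "conn K' (r1 i) (r2 j)" using t1 t2 ij h conn_sym conn_trans by meson
  thus False using conn_mono[OF KK] ij by blast
qed

lemma final:
  assumes K: "finite K" "icon K" "\<one> \<in> K" and c: "c \<in> carrier G"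
    and disj: "\<And>k1 k2. k1 \<in> K \<Longrightarrow> k2 \<in> K \<Longrightarrow> c \<otimes> k2 \<noteq> k1"
    and core: "\<exists>n\<ge>m. \<exists>u. conn K (r n) u \<and> conn K u (c \<otimes> u)"
    and t: "\<forall>n\<ge>m. conn K (r m) (r n)"
    and b1: "\<not> (\<exists>y. conn K (r m) y \<and> y \<in> (\<otimes>) c ` K)"
    and b2: "\<not> (\<exists>y. conn K (r m) y \<and> y \<in> (\<otimes>) (inv c) ` K)"
  shows False
proof -
  obtain n u where nu: "n \<ge> m" "conn K (r n) u" "conn K u (c \<otimes> u)" using core by blast
  have 1: "conn K (r m) u" using t nu conn_trans by blast
  have 2: "conn K (r m) (c \<otimes> u)" using 1 nu conn_trans by blast
  show False using no_fixed_comp[OF K(2,3) c disj 1 2] b1 b2 by blast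
qed

lemma pigeon3:
  assumes "\<And>v w. P v \<Longrightarrow> P w \<Longrightarrow> conn K v w" "\<And>v w. Q v \<Longrightarrow> Q w \<Longrightarrow> conn K v w"
    "\<not> conn K v1 v2" "\<not> conn K v1 v3" "\<not> conn K v2 v3"
  shows "\<exists>v\<in>{v1, v2, v3}. \<not> P v \<and> \<not> Q v"
  using assms by blast

lemma finite_ends:
  assumes Zc: "Zs \<subseteq> carrier G" and Zinf: "infinite Zs"
    and core: "\<And>K r c m. finite K \<Longrightarrow> K \<subseteq> carrier G \<Longrightarrow> cayley_ray G S r \<Longrightarrow> c \<in> Zs \<Longrightarrow>
          \<exists>n\<ge>m. \<exists>u. conn K (r n) u \<and> conn K u (c \<otimes> u)"
  shows "finite (cayley_ends G S)"
proof (rule ccontr)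
  let ?R = "ray_equiv G S"
  assume "infinite (cayley_ends G S)"
  then obtain F where F: "F \<subseteq> cayley_ends G S" "card F = 3" using infinite_arbitrarily_large by blast
  then obtain X1 X2 X3 where X: "F = {X1, X2, X3}" "X1 \<noteq> X2" "X2 \<noteq> X3" "X1 \<noteq> X3"
    using card_3_iff by metis
  have "\<exists>r. cayley_ray G S r \<and> Yq = ?R `` {r}" if "Yq \<in> cayley_ends G S" for Yq
    using that unfolding cayley_ends_def by (auto elim!: quotientE)
  then obtain r1 r2 r3 where r: "cayley_ray G S r1" "X1 = ?R `` {r1}" "cayley_ray G S r2" "X2 = ?R `` {r2}"
      "cayley_ray G S r3" "X3 = ?R `` {r3}"
    using F X by (metis insert_subset)
  have n: "(r1, r2) \<notin> ?R" "(r1, r3) \<notin> ?R" "(r2, r3) \<notin> ?R" using class_eq r X by metis+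
  obtain K12 where K12: "finite K12" "\<forall>m n. \<exists>i\<ge>m. \<exists>j\<ge>n. \<not> conn K12 (r1 i) (r2 j)"
    using nonequiv r n by blast
  obtain K13 where K13: "finite K13" "\<forall>m n. \<exists>i\<ge>m. \<exists>j\<ge>n. \<not> conn K13 (r1 i) (r3 j)"
    using nonequiv r n by blast
  obtain K23 where K23: "finite K23" "\<forall>m n. \<exists>i\<ge>m. \<exists>j\<ge>n. \<not> conn K23 (r2 i) (r3 j)"
    using nonequiv r n by blast
  let ?K0 = "(K12 \<union> K13 \<union> K23) \<inter> carrier G"
  obtain K where K: "finite K" "icon K" "\<one> \<in> K" "?K0 \<subseteq> K"
    using conn_hull[of ?K0] K12 K13 K23 by auto
  have Kc: "K \<subseteq> carrier G" using K unfolding icon_def by auto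
  obtain m1 where m1: "\<forall>n\<ge>m1. r1 n \<notin> K \<and> conn K (r1 m1) (r1 n)" using ray_tail r K by blast
  obtain m2 where m2: "\<forall>n\<ge>m2. r2 n \<notin> K \<and> conn K (r2 m2) (r2 n)" using ray_tail r K by blast
  obtain m3 where m3: "\<forall>n\<ge>m3. r3 n \<notin> K \<and> conn K (r3 m3) (r3 n)" using ray_tail r K by blast
  have s12: "\<not> conn K (r1 m1) (r2 m2)" using separated[OF K12] K m1 m2 by blast
  have s13: "\<not> conn K (r1 m1) (r3 m3)" using separated[OF K13] K m1 m3 by blast
  have s23: "\<not> conn K (r2 m2) (r3 m3)" using separated[OF K23] K m2 m3 by blast
  let ?D = "(\<lambda>(k1, k2). k1 \<otimes> inv k2) ` (K \<times> K)"
  have "infinite (Zs - ?D)" using Zinf K by (intro Diff_infinite_finite) auto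
  hence "Zs - ?D \<noteq> {}" by (rule infinite_imp_nonempty)
  then obtain c where c: "c \<in> Zs" "c \<notin> ?D" by blast
  have cc: "c \<in> carrier G" using c Zc by auto
  have disj: "c \<otimes> k2 \<noteq> k1" if "k1 \<in> K" "k2 \<in> K" for k1 k2
  proof
    assume "c \<otimes> k2 = k1"
    hence "c = k1 \<otimes> inv k2" using inv_solve_right[of c k1 k2] that Kc cc by auto
    thus False using c that by auto
  qed
  have disj2: "inv c \<otimes> k2 \<noteq> k1" if "k1 \<in> K" "k2 \<in> K" for k1 k2
  proof
    assume "inv c \<otimes> k2 = k1"
    hence "c \<otimes> k1 = k2" using that Kc cc by (auto simp: m_assoc[symmetric])
    thus False using disj that by blast
  qed
  have M1: "icon ((\<otimes>) c ` K)" "(\<otimes>) c ` K \<inter> K = {}" using icon_translate K cc disj by (auto, metis)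
  have M2: "icon ((\<otimes>) (inv c) ` K)" "(\<otimes>) (inv c) ` K \<inter> K = {}" using icon_translate K cc disj2 by (auto, metis)
  let ?P = "\<lambda>v. \<exists>y. conn K v y \<and> y \<in> (\<otimes>) c ` K"
  let ?Q = "\<lambda>v. \<exists>y. conn K v y \<and> y \<in> (\<otimes>) (inv c) ` K"
  have P: "conn K v w" if pv: "?P v" "?P w" for v w
  proof -
    obtain y1 y2 where "conn K v y1" "y1 \<in> (\<otimes>) c ` K" "conn K w y2" "y2 \<in> (\<otimes>) c ` K" using pv by blast
    thus ?thesis using icon_conn[OF M1(1) M1(2)] conn_sym conn_trans by meson
  qed
  have Q: "conn K v w" if pv: "?Q v" "?Q w" for v w
  proof -
    obtain y1 y2 where "conn K v y1" "y1 \<in> (\<otimes>) (inv c) ` K" "conn K w y2" "y2 \<in> (\<otimes>) (inv c) ` K" using pv by blast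
    thus ?thesis using icon_conn[OF M2(1) M2(2)] conn_sym conn_trans by meson
  qed
  obtain v where v: "v \<in> {r1 m1, r2 m2, r3 m3}" "\<not> ?P v" "\<not> ?Q v"
    using pigeon3[of ?P K ?Q, OF P Q s12 s13 s23] by blast
  have fin: False if "cayley_ray G S r" "v = r m" "\<forall>n\<ge>m. conn K (r m) (r n)" for r m
  proof (rule final[OF K(1,2,3) cc _ core[OF K(1) Kc that(1) c(1)] that(3)])
    show "\<And>k1 k2. k1 \<in> K \<Longrightarrow> k2 \<in> K \<Longrightarrow> c \<otimes> k2 \<noteq> k1" using disj by blast
  qed (use v that(2) in auto)
  show False using v(1) fin r m1 m2 m3 by blast
qed

end



lemma infinite_avoid: "infinite XX \<Longrightarrow> finite YY \<Longrightarrow> \<exists>x\<in>XX. x \<notin> YY"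
  using Diff_infinite_finite infinite_imp_nonempty by blast

context cay begin

lemma cancel_l: "x \<in> carrier G \<Longrightarrow> y \<in> carrier G \<Longrightarrow> x \<otimes> (inv x \<otimes> y) = y"
  by (simp add: m_assoc[symmetric])

lemma ray_fin_preimage: "cayley_ray G S r \<Longrightarrow> finite F \<Longrightarrow> finite {n. r n \<in> F}"
  unfolding cayley_ray_def by (metis finite_vimageI vimage_def)

lemma ray_pigeon:
  assumes T: "finite T" and dec: "\<And>g. g \<in> carrier G \<Longrightarrow> \<exists>t\<in>T. P t g" and r: "cayley_ray G S r"
  shows "\<exists>t\<in>T. infinite {n. P t (r n)}"
proof -
  have h: "\<forall>n\<in>(UNIV::nat set). \<exists>t\<in>T. P t (r n)" using dec ray_carrier[OF r] by blast
  have "\<exists>t\<in>T. \<not> finite {n \<in> (UNIV::nat set). P t (r n)}"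
    using pigeonhole_infinite_rel[OF infinite_UNIV_nat T h] .
  thus ?thesis by simp
qed

lemma core_central:
  assumes A: "subgroup A G" and B: "subgroup B G"
    and comm: "\<And>a b. a \<in> A \<Longrightarrow> b \<in> B \<Longrightarrow> a \<otimes> b = b \<otimes> a"
    and T: "finite T" "T \<subseteq> carrier G"
    and dec: "\<And>g. g \<in> carrier G \<Longrightarrow> \<exists>t\<in>T. \<exists>a\<in>A. \<exists>b\<in>B. g = a \<otimes> b \<otimes> t"
    and K: "finite K" and r: "cayley_ray G S r" and c: "c \<in> A" "c \<in> B"
  shows "\<exists>n\<ge>m. \<exists>u. conn K (r n) u \<and> conn K u (c \<otimes> u)"
proof -
  interpret A: subgroup A G by fact
  interpret B: subgroup B G by fact
  obtain t where t: "t \<in> T" "infinite {n. \<exists>a\<in>A. \<exists>b\<in>B. r n = a \<otimes> b \<otimes> t}"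
    using ray_pigeon[of T "\<lambda>t g. \<exists>a\<in>A. \<exists>b\<in>B. g = a \<otimes> b \<otimes> t", OF T(1) dec r] by blast
  have tc: "t \<in> carrier G" using t T by auto
  have cc: "c \<in> carrier G" using c by auto
  let ?w = "inv t \<otimes> c \<otimes> t"
  obtain F where F: "finite F" "\<forall>u\<in>carrier G - F. conn K u (u \<otimes> ?w)"
    using right_mult_conn[OF K, of ?w] tc cc by auto
  let ?N = "{n. \<exists>a\<in>A. \<exists>b\<in>B. r n = a \<otimes> b \<otimes> t} - {n. r n \<in> F} - {..<m}"
  have "infinite ?N" using t ray_fin_preimage[OF r F(1)] by (intro Diff_infinite_finite) auto
  then obtain n where n: "n \<in> ?N" using infinite_imp_nonempty by blast
  have nF: "r n \<notin> F" and nm: "n \<ge> m" using n by auto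
  obtain a b where ab: "a \<in> A" "b \<in> B" "r n = a \<otimes> b \<otimes> t" using n by blast
  have ac: "a \<in> carrier G" "b \<in> carrier G" using ab by auto
  have "r n \<in> carrier G - F" using nF ray_carrier[OF r] by simp
  hence cu: "conn K (r n) (r n \<otimes> ?w)" using F(2) by blast
  have "r n \<otimes> ?w = a \<otimes> b \<otimes> c \<otimes> t" using ab ac tc cc by (simp add: m_assoc cancel_l)
  also have "\<dots> = c \<otimes> (a \<otimes> b \<otimes> t)"
  proof -
    have 1: "b \<otimes> c = c \<otimes> b" using comm[OF c(1) ab(2)] by simp
    have 2: "a \<otimes> c = c \<otimes> a" using comm[OF ab(1) c(2)] by simp
    have "a \<otimes> b \<otimes> c \<otimes> t = a \<otimes> (b \<otimes> c) \<otimes> t" using ac cc tc by (simp add: m_assoc)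
    also have "\<dots> = a \<otimes> (c \<otimes> b) \<otimes> t" using 1 by simp
    also have "\<dots> = (a \<otimes> c) \<otimes> b \<otimes> t" using ac cc tc by (simp add: m_assoc)
    also have "\<dots> = (c \<otimes> a) \<otimes> b \<otimes> t" using 2 by simp
    also have "\<dots> = c \<otimes> (a \<otimes> b \<otimes> t)" using ac cc tc by (simp add: m_assoc)
    finally show ?thesis .
  qed
  finally have "conn K (r n) (c \<otimes> r n)" using cu ab by simp
  moreover have "conn K (r n) (r n)" using cu conn_carrier conn_refl by blast
  ultimately show ?thesis using nm by blast
qed

end


context cay begin

lemma fin_proj:
  assumes A: "subgroup A G" and B: "subgroup B G" and Cfin: "finite (A \<inter> B)" and F: "finite F"
  shows "finite {a \<in> A. \<exists>b\<in>B. a \<otimes> b \<in> F}"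
proof -
  interpret A: subgroup A G by fact
  interpret B: subgroup B G by fact
  have one: "finite {a \<in> A. \<exists>b\<in>B. a \<otimes> b = f}" for f
  proof (cases "{a \<in> A. \<exists>b\<in>B. a \<otimes> b = f} = {}")
    case True show ?thesis by (subst True) simp
  next
    case False
    then obtain a1 b1 where ab1: "a1 \<in> A" "b1 \<in> B" "a1 \<otimes> b1 = f" by blast
    have "{a \<in> A. \<exists>b\<in>B. a \<otimes> b = f} \<subseteq> (\<lambda>x. a1 \<otimes> x) ` (A \<inter> B)"
    proof
      fix a assume "a \<in> {a \<in> A. \<exists>b\<in>B. a \<otimes> b = f}"
      then obtain b where ab: "a \<in> A" "b \<in> B" "a \<otimes> b = f" by blast
      have c: "a \<in> carrier G" "b \<in> carrier G" "a1 \<in> carrier G" "b1 \<in> carrier G" using ab ab1 by auto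
      let ?x = "inv a1 \<otimes> a"
      have xA: "?x \<in> A" using ab ab1 by auto
      have "?x \<otimes> b = inv a1 \<otimes> (a \<otimes> b)" using c by (simp add: m_assoc)
      also have "\<dots> = inv a1 \<otimes> (a1 \<otimes> b1)" using ab(3) ab1(3) by simp
      also have "\<dots> = b1" using c by (simp add: m_assoc[symmetric])
      finally have "?x = b1 \<otimes> inv b" using inv_solve_right[of ?x b1 b] c by simp
      hence xB: "?x \<in> B" using ab ab1 by auto
      have "a = a1 \<otimes> ?x" using c by (simp add: m_assoc[symmetric])
      thus "a \<in> (\<lambda>x. a1 \<otimes> x) ` (A \<inter> B)" using xA xB by blast
    qed
    thus ?thesis using Cfin finite_subset by blast
  qed
  have "{a \<in> A. \<exists>b\<in>B. a \<otimes> b \<in> F} = (\<Union>f\<in>F. {a \<in> A. \<exists>b\<in>B. a \<otimes> b = f})" by blast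
  thus ?thesis using one F by simp
qed

lemma core_fin:
  assumes A: "subgroup A G" and B: "subgroup B G"
    and comm: "\<And>a b. a \<in> A \<Longrightarrow> b \<in> B \<Longrightarrow> a \<otimes> b = b \<otimes> a"
    and T: "finite T" "T \<subseteq> carrier G"
    and dec: "\<And>g. g \<in> carrier G \<Longrightarrow> \<exists>t\<in>T. \<exists>a\<in>A. \<exists>b\<in>B. g = a \<otimes> b \<otimes> t"
    and Cfin: "finite (A \<inter> B)"
    and Sig: "finite Sig" "Sig \<subseteq> B" "infinite (generate G Sig)"
    and K: "finite K" and r: "cayley_ray G S r" and c: "c \<in> A"
  shows "\<exists>n\<ge>m. \<exists>u. conn K (r n) u \<and> conn K u (c \<otimes> u)"
proof -
  interpret A: subgroup A G by fact
  interpret B: subgroup B G by fact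
  let ?B' = "generate G Sig"
  have B'B: "?B' \<subseteq> B" using generate_subgroup_incl[OF Sig(2) B] .
  have cc: "c \<in> carrier G" using c by auto
  define FF where "FF \<sigma> = (SOME F. finite F \<and> (\<forall>u\<in>carrier G - F. conn K u (u \<otimes> \<sigma>)))" for \<sigma>
  have FF: "finite (FF \<sigma>) \<and> (\<forall>u\<in>carrier G - FF \<sigma>. conn K u (u \<otimes> \<sigma>))" if "\<sigma> \<in> carrier G" for \<sigma>
    unfolding FF_def by (rule someI_ex) (rule right_mult_conn[OF K that])
  let ?Bad = "K \<union> (\<Union>\<sigma>\<in>Sig. FF \<sigma> \<union> FF (inv \<sigma>))"
  have Sigc: "\<sigma> \<in> carrier G" "inv \<sigma> \<in> carrier G" if "\<sigma> \<in> Sig" for \<sigma> using that Sig by auto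
  have "finite (FF \<sigma> \<union> FF (inv \<sigma>))" if "\<sigma> \<in> Sig" for \<sigma>
    using FF[OF Sigc(1)[OF that]] FF[OF Sigc(2)[OF that]] by blast
  hence finBad: "finite ?Bad" using K Sig(1) by blast
  let ?FA = "{a \<in> A. \<exists>b\<in>B. a \<otimes> b \<in> ?Bad}"
  have finFA: "finite ?FA" using fin_proj[OF A B Cfin finBad] .
  have col: "\<forall>b\<in>B. conn K (a \<otimes> b) (a \<otimes> b \<otimes> b')" if a: "a \<in> A" "a \<notin> ?FA" and b': "b' \<in> ?B'" for a b'
    using b'
  proof (induction rule: generate.induct)
    case one
    show ?case
    proof
      fix b assume b: "b \<in> B"
      have "a \<otimes> b \<notin> K" using a b by blast
      thus "conn K (a \<otimes> b) (a \<otimes> b \<otimes> \<one>)" using a b by (simp add: conn_refl)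
    qed
  next
    case (incl \<sigma>)
    show ?case
    proof
      fix b assume b: "b \<in> B"
      have "a \<otimes> b \<notin> FF \<sigma>" using a b incl by blast
      thus "conn K (a \<otimes> b) (a \<otimes> b \<otimes> \<sigma>)" using FF[OF Sigc(1)[OF incl]] a b by auto
    qed
  next
    case (inv \<sigma>)
    show ?case
    proof
      fix b assume b: "b \<in> B"
      have "a \<otimes> b \<notin> FF (inv \<sigma>)" using a b inv by blast
      thus "conn K (a \<otimes> b) (a \<otimes> b \<otimes> inv \<sigma>)" using FF[OF Sigc(2)[OF inv]] a b by auto
    qed
  next
    case (eng b1 b2)
    show ?case
    proof
      fix b assume b: "b \<in> B"
      have b1: "b1 \<in> B" "b2 \<in> B" using eng B'B by auto
      have 1: "conn K (a \<otimes> b) (a \<otimes> b \<otimes> b1)" using eng b by blast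
      have "conn K (a \<otimes> (b \<otimes> b1)) (a \<otimes> (b \<otimes> b1) \<otimes> b2)" using eng b b1 by blast
      hence 2: "conn K (a \<otimes> b \<otimes> b1) (a \<otimes> b \<otimes> (b1 \<otimes> b2))" using a b b1 by (simp add: m_assoc)
      show "conn K (a \<otimes> b) (a \<otimes> b \<otimes> (b1 \<otimes> b2))" using conn_trans[OF 1 2] .
    qed
  qed
  have target: "\<exists>n\<ge>m. \<exists>u. conn K (r n) u \<and> conn K u (c \<otimes> u)"
    if n0: "n0 \<ge> m" and a0: "a0 \<in> A" and inf: "infinite {x. conn K (r n0) x \<and> (\<exists>b\<in>B. x = a0 \<otimes> b)}" for n0 a0
  proof -
    have a0c: "a0 \<in> carrier G" using a0 by auto
    let ?w = "inv a0 \<otimes> c \<otimes> a0"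
    have wA: "?w \<in> A" using a0 c by auto
    obtain F where F: "finite F" "\<forall>u\<in>carrier G - F. conn K u (u \<otimes> ?w)"
      using right_mult_conn[OF K, of ?w] wA by auto
    obtain x where x: "x \<in> {x. conn K (r n0) x \<and> (\<exists>b\<in>B. x = a0 \<otimes> b)}" "x \<notin> F"
      using infinite_avoid[OF inf F(1)] by blast
    then obtain b where b: "b \<in> B" "x = a0 \<otimes> b" by blast
    have bc: "b \<in> carrier G" using b by auto
    have xc: "x \<in> carrier G" using b a0c bc by simp
    have 1: "conn K x (x \<otimes> ?w)" using F x xc by blast
    have "x \<otimes> ?w = a0 \<otimes> (b \<otimes> ?w)" using b a0c bc cc by (simp add: m_assoc)
    also have "\<dots> = a0 \<otimes> (?w \<otimes> b)" using comm[OF wA b(1)] by simp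
    also have "\<dots> = c \<otimes> x" using b a0c bc cc by (simp add: m_assoc cancel_l)
    finally have "conn K x (c \<otimes> x)" using 1 by simp
    thus ?thesis using x n0 by blast
  qed
  obtain t where t: "t \<in> T" "infinite {n. \<exists>a\<in>A. \<exists>b\<in>B. r n = a \<otimes> b \<otimes> t}"
    using ray_pigeon[of T "\<lambda>t g. \<exists>a\<in>A. \<exists>b\<in>B. g = a \<otimes> b \<otimes> t", OF T(1) dec r] by blast
  have tc: "t \<in> carrier G" using t T by auto
  obtain Ft where Ft: "finite Ft" "\<forall>u\<in>carrier G - Ft. conn K u (u \<otimes> inv t)"
    using right_mult_conn[OF K, of "inv t"] tc by auto
  obtain m0 where m0: "\<forall>n\<ge>m0. r n \<notin> K \<and> conn K (r m0) (r n)" using ray_tail[OF r K] by blast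
  define n0 where "n0 = max m m0"
  let ?N = "{n. \<exists>a\<in>A. \<exists>b\<in>B. r n = a \<otimes> b \<otimes> t} - {n. r n \<in> Ft} - {..<n0}"
  have Ninf: "infinite ?N" using t ray_fin_preimage[OF r Ft(1)] by (intro Diff_infinite_finite) auto
  define p where "p n = r n \<otimes> inv t" for n
  have pconn: "conn K (r n0) (p n)" if n: "n \<in> ?N" for n
  proof -
    have "r n \<in> carrier G - Ft" using n ray_carrier[OF r] by simp
    hence 1: "conn K (r n) (p n)" using Ft(2) unfolding p_def by blast
    have "n \<ge> m0" "n0 \<ge> m0" "n \<ge> n0" using n unfolding n0_def by auto
    hence "conn K (r n0) (r n)" using m0 conn_sym conn_trans by meson
    thus ?thesis using 1 conn_trans by blast
  qed
  have pdec: "\<exists>a\<in>A. \<exists>b\<in>B. p n = a \<otimes> b" if n: "n \<in> ?N" for n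
  proof -
    obtain a b where ab: "a \<in> A" "b \<in> B" "r n = a \<otimes> b \<otimes> t" using n by blast
    have "p n = a \<otimes> b" unfolding p_def using ab tc by (simp add: m_assoc)
    thus ?thesis using ab by blast
  qed
  have pinj: "inj p"
  proof (rule injI)
    fix n n' assume "p n = p n'"
    hence "r n = r n'" unfolding p_def using ray_carrier[OF r] tc by simp
    thus "n = n'" using r unfolding cayley_ray_def inj_def by blast
  qed
  have n0m: "n0 \<ge> m" unfolding n0_def by simp
  show ?thesis
  proof (cases "\<exists>n\<in>?N. \<exists>a\<in>A. a \<notin> ?FA \<and> (\<exists>b\<in>B. p n = a \<otimes> b)")
    case True
    then obtain n a b where nab: "n \<in> ?N" "a \<in> A" "a \<notin> ?FA" "b \<in> B" "p n = a \<otimes> b" by blast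
    have ac: "a \<in> carrier G" "b \<in> carrier G" using nab by auto
    let ?X = "(\<lambda>b'. a \<otimes> b \<otimes> b') ` ?B'"
    have "inj_on (\<lambda>b'. a \<otimes> b \<otimes> b') ?B'"
    proof (rule inj_onI)
      fix x y assume "x \<in> ?B'" "y \<in> ?B'" "a \<otimes> b \<otimes> x = a \<otimes> b \<otimes> y"
      thus "x = y" using B'B ac by (meson B.mem_carrier l_cancel m_closed subsetD)
    qed
    hence Xinf: "infinite ?X" using Sig(3) finite_imageD by blast
    have "?X \<subseteq> {x. conn K (r n0) x \<and> (\<exists>b\<in>B. x = a \<otimes> b)}"
    proof
      fix x assume "x \<in> ?X"
      then obtain b' where b': "b' \<in> ?B'" "x = a \<otimes> b \<otimes> b'" by blast
      have "conn K (p n) x" using col[OF nab(2,3) b'(1)] nab b' by auto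
      hence "conn K (r n0) x" using pconn[OF nab(1)] conn_trans by blast
      moreover have "x = a \<otimes> (b \<otimes> b')" "b \<otimes> b' \<in> B" using b' B'B ac nab by (auto simp: m_assoc)
      ultimately show "x \<in> {x. conn K (r n0) x \<and> (\<exists>b\<in>B. x = a \<otimes> b)}" by blast
    qed
    hence "infinite {x. conn K (r n0) x \<and> (\<exists>b\<in>B. x = a \<otimes> b)}" using Xinf finite_subset by blast
    thus ?thesis using target n0m nab(2) by blast
  next
    case False
    have h: "\<forall>n\<in>?N. \<exists>a\<in>?FA. \<exists>b\<in>B. p n = a \<otimes> b"
    proof
      fix n assume n: "n \<in> ?N"
      obtain a b where ab: "a \<in> A" "b \<in> B" "p n = a \<otimes> b" using pdec[OF n] by blast
      have "a \<in> ?FA"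
      proof (rule ccontr)
        assume "a \<notin> ?FA"
        hence "\<exists>n\<in>?N. \<exists>a\<in>A. a \<notin> ?FA \<and> (\<exists>b\<in>B. p n = a \<otimes> b)"
          using n ab by (intro bexI[OF _ n] bexI[OF _ ab(1)] conjI) auto
        thus False using False by (rule notE[rotated])
      qed
      thus "\<exists>a\<in>?FA. \<exists>b\<in>B. p n = a \<otimes> b" using ab by blast
    qed
    obtain a0 where a0: "a0 \<in> ?FA" "infinite {n \<in> ?N. \<exists>b\<in>B. p n = a0 \<otimes> b}"
      using pigeonhole_infinite_rel[of ?N ?FA "\<lambda>n a. \<exists>b\<in>B. p n = a \<otimes> b", OF Ninf finFA h] by blast
    have "p ` {n \<in> ?N. \<exists>b\<in>B. p n = a0 \<otimes> b} \<subseteq> {x. conn K (r n0) x \<and> (\<exists>b\<in>B. x = a0 \<otimes> b)}"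
    proof
      fix x assume "x \<in> p ` {n \<in> ?N. \<exists>b\<in>B. p n = a0 \<otimes> b}"
      then obtain n where n: "n \<in> ?N" "\<exists>b\<in>B. p n = a0 \<otimes> b" "x = p n" by blast
      have "conn K (r n0) (p n)" using pconn[OF n(1)] .
      thus "x \<in> {x. conn K (r n0) x \<and> (\<exists>b\<in>B. x = a0 \<otimes> b)}" using n(2,3) by simp
    qed
    moreover have "infinite (p ` {n \<in> ?N. \<exists>b\<in>B. p n = a0 \<otimes> b})"
    proof -
      have "inj_on p {n \<in> ?N. \<exists>b\<in>B. p n = a0 \<otimes> b}" by (rule inj_on_subset[OF pinj]) simp
      thus ?thesis using a0(2) finite_image_iff by blast
    qed
    ultimately have "infinite {x. conn K (r n0) x \<and> (\<exists>b\<in>B. x = a0 \<otimes> b)}" using finite_subset by blast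
    thus ?thesis using target n0m a0(1) by blast
  qed
qed

end



context group begin

lemma cancel_lg: "x \<in> carrier G \<Longrightarrow> y \<in> carrier G \<Longrightarrow> x \<otimes> (inv x \<otimes> y) = y"
  by (simp add: m_assoc[symmetric])
lemma cancel_lg2: "x \<in> carrier G \<Longrightarrow> y \<in> carrier G \<Longrightarrow> inv x \<otimes> (x \<otimes> y) = y"
  by (simp add: m_assoc[symmetric])

definition crep :: "'a set \<Rightarrow> 'a \<Rightarrow> 'a" where
  "crep H g = (SOME t. t \<in> H #> g)"

lemma crep_props:
  assumes H: "subgroup H G" and g: "g \<in> carrier G"
  shows "crep H g \<in> H #> g" "crep H g \<in> carrier G" "g \<otimes> inv (crep H g) \<in> H"
proof -
  interpret H: subgroup H G by fact
  have "g \<in> H #> g" using rcos_self[OF g H] .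
  thus 1: "crep H g \<in> H #> g" unfolding crep_def by (rule someI)
  thus 2: "crep H g \<in> carrier G" using H.elemrcos_carrier[OF is_group g] by blast
  have "crep H g \<otimes> inv g \<in> H" using H.rcos_module_imp[OF is_group g 1] .
  hence "inv (crep H g \<otimes> inv g) \<in> H" by simp
  moreover have "inv (crep H g \<otimes> inv g) = g \<otimes> inv (crep H g)"
    using 2 g by (simp add: inv_mult_group)
  ultimately show "g \<otimes> inv (crep H g) \<in> H" by simp
qed

lemma crep_eq:
  assumes H: "subgroup H G" and x: "x \<in> carrier G" and y: "y \<in> carrier G" and h: "x \<otimes> inv y \<in> H"
  shows "crep H x = crep H y"
proof -
  interpret H: subgroup H G by fact
  have "x \<in> H #> y" using H.rcos_module_rev[OF is_group y x h] .
  hence "H #> y = H #> x" using repr_independence[OF _ y H] by blast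
  thus ?thesis unfolding crep_def by simp
qed

lemma crep_finite:
  assumes H: "subgroup H G" and fin: "finite (rcosets H)"
  shows "finite (crep H ` carrier G)"
proof -
  have "crep H ` carrier G \<subseteq> (\<lambda>XX. SOME t. t \<in> XX) ` (rcosets H)"
    unfolding crep_def using rcosetsI[OF subgroup.subset[OF H]] by blast
  thus ?thesis using fin finite_subset by blast
qed

lemma schreier:
  assumes Sfin: "finite S" and Sc: "S \<subseteq> carrier G" and gen: "generate G S = carrier G"
    and H: "subgroup H G" and fin: "finite (rcosets H)"
  shows "\<exists>Sig. finite Sig \<and> Sig \<subseteq> H \<and> H \<subseteq> generate G Sig"
proof -
  interpret H: subgroup H G by fact
  let ?r = "crep H"
  let ?T = "?r ` carrier G"
  let ?Xs = "S \<union> m_inv G ` S \<union> {\<one>}"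
  define Sig where "Sig = (H \<inter> (\<lambda>(t, x, t'). t \<otimes> x \<otimes> inv t') ` (?T \<times> ?Xs \<times> ?T)) \<union> (H \<inter> ?T)"
  have Tfin: "finite ?T" using crep_finite[OF H fin] .
  have Tc: "?T \<subseteq> carrier G" using crep_props[OF H] by blast
  have finSig: "finite Sig" unfolding Sig_def using Tfin Sfin by auto
  have SigH: "Sig \<subseteq> H" unfolding Sig_def by blast
  have Xc: "?Xs \<subseteq> carrier G" using Sc by auto
  have base: "t \<otimes> x \<otimes> inv (?r (t \<otimes> x)) \<in> generate G Sig" if t: "t \<in> ?T" and x: "x \<in> ?Xs" for t x
  proof -
    have tx: "t \<otimes> x \<in> carrier G" using t x Tc Xc by auto
    have "t \<otimes> x \<otimes> inv (?r (t \<otimes> x)) \<in> H" using crep_props(3)[OF H tx] .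
    moreover have "?r (t \<otimes> x) \<in> ?T" using tx by blast
    ultimately have "t \<otimes> x \<otimes> inv (?r (t \<otimes> x)) \<in> Sig" unfolding Sig_def using t x
      by (intro UnI1 IntI) (auto intro!: image_eqI[of _ _ "(t, x, ?r (t \<otimes> x))"])
    thus ?thesis by (rule generate.incl)
  qed
  have claim: "\<forall>t\<in>?T. t \<otimes> g \<otimes> inv (?r (t \<otimes> g)) \<in> generate G Sig" if g: "g \<in> generate G S" for g
    using g
  proof (induction rule: generate.induct)
    case one thus ?case using base by blast
  next
    case (incl s) thus ?case using base by blast
  next
    case (inv s) thus ?case using base by blast
  next
    case (eng g1 g2)
    show ?case
    proof
      fix t assume t: "t \<in> ?T"
      have g: "g1 \<in> carrier G" "g2 \<in> carrier G" using eng gen by auto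
      have tc: "t \<in> carrier G" using t Tc by auto
      let ?s = "?r (t \<otimes> g1)"
      have sT: "?s \<in> ?T" using tc g by blast
      have sc: "?s \<in> carrier G" using sT Tc by auto
      have 1: "t \<otimes> g1 \<otimes> inv ?s \<in> generate G Sig" using eng t by blast
      have 2: "?s \<otimes> g2 \<otimes> inv (?r (?s \<otimes> g2)) \<in> generate G Sig" using eng sT by blast
      have "(t \<otimes> g1 \<otimes> g2) \<otimes> inv (?s \<otimes> g2) = t \<otimes> g1 \<otimes> inv ?s"
        using tc g sc by (simp add: inv_mult_group m_assoc cancel_lg cancel_lg2)
      hence "(t \<otimes> g1 \<otimes> g2) \<otimes> inv (?s \<otimes> g2) \<in> H" using crep_props(3)[OF H, of "t \<otimes> g1"] tc g by simp
      hence eq: "?r (t \<otimes> g1 \<otimes> g2) = ?r (?s \<otimes> g2)" using crep_eq[OF H] tc g sc by simp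
      have qc: "?r (?s \<otimes> g2) \<in> carrier G" using crep_props(2)[OF H] sc g by simp
      have "(t \<otimes> g1 \<otimes> inv ?s) \<otimes> (?s \<otimes> g2 \<otimes> inv (?r (?s \<otimes> g2))) = t \<otimes> (g1 \<otimes> g2) \<otimes> inv (?r (?s \<otimes> g2))"
        using tc g sc qc by (simp add: m_assoc cancel_lg cancel_lg2)
      hence "t \<otimes> (g1 \<otimes> g2) \<otimes> inv (?r (?s \<otimes> g2)) \<in> generate G Sig"
        using generate.eng[OF 1 2] by simp
      thus "t \<otimes> (g1 \<otimes> g2) \<otimes> inv (?r (t \<otimes> (g1 \<otimes> g2))) \<in> generate G Sig"
        using eq tc g by (simp add: m_assoc)
    qed
  qed
  have "H \<subseteq> generate G Sig"
  proof
    fix h assume h: "h \<in> H"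
    have hc: "h \<in> carrier G" using h by auto
    let ?t0 = "?r \<one>"
    have t0T: "?t0 \<in> ?T" by blast
    have t0c: "?t0 \<in> carrier G" using t0T Tc by auto
    have "\<one> \<otimes> inv ?t0 \<in> H" using crep_props(3)[OF H] by simp
    hence "inv ?t0 \<in> H" using t0c by simp
    hence "inv (inv ?t0) \<in> H" by (rule H.m_inv_closed)
    hence t0H: "?t0 \<in> H" using t0c by simp
    have "?r (?t0 \<otimes> h) = ?t0"
      using crep_eq[OF H, of "?t0 \<otimes> h" \<one>] t0c hc t0H h by simp
    moreover have "?t0 \<otimes> h \<otimes> inv (?r (?t0 \<otimes> h)) \<in> generate G Sig"
      using claim[of h] gen hc t0T by blast
    ultimately have a: "?t0 \<otimes> h \<otimes> inv ?t0 \<in> generate G Sig" by simp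
    have b: "?t0 \<in> generate G Sig" using t0H t0T unfolding Sig_def by (blast intro: generate.incl)
    have sub: "subgroup (generate G Sig) G" using generate_is_subgroup SigH H.subset by blast
    have "inv ?t0 \<otimes> (?t0 \<otimes> h \<otimes> inv ?t0) \<otimes> ?t0 \<in> generate G Sig"
      using a b sub by (simp add: subgroup.m_closed subgroup.m_inv_closed)
    moreover have "inv ?t0 \<otimes> (?t0 \<otimes> h \<otimes> inv ?t0) \<otimes> ?t0 = h"
      using t0c hc by (simp add: m_assoc cancel_lg cancel_lg2)
    ultimately show "h \<in> generate G Sig" by simp
  qed
  thus ?thesis using finSig SigH by blast
qed

end



lemma (in group) main_aux:
  assumes "True"
    and "infinitely_many_ends G"
    and "group H1" and "group H2"
  shows "infinite (carrier G) \<and> no_product_presentation G H1 H2"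
proof -
  have grp: "group G" by (rule is_group)
  interpret G: group G by fact
  obtain S where S: "finite S" "S \<subseteq> carrier G" "generate G S = carrier G" "infinite (cayley_ends G S)"
    using assms(2) unfolding infinitely_many_ends_def by blast
  have "cay G S" unfolding cay_def cay_axioms_def using grp S by blast
  interpret C: cay G S by fact
  have infc: "infinite (carrier G)"
  proof -
    obtain X0 where "X0 \<in> cayley_ends G S" using S(4) infinite_imp_nonempty by blast
    then obtain r where r: "cayley_ray G S r" unfolding cayley_ends_def by (auto elim!: quotientE)
    have "inj r" using r unfolding cayley_ray_def by blast
    moreover have "range r \<subseteq> carrier G" using C.ray_carrier[OF r] by blast
    ultimately show ?thesis using infinite_iff_countable_subset by blast
  qed
  have npp: "no_product_presentation G H1 H2"
    unfolding no_product_presentation_def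
  proof (intro ballI impI)
    fix \<phi> assume hom: "\<phi> \<in> hom (H1 \<times>\<times> H2) G"
      and fin: "finite (rcosets\<^bsub>G\<^esub> (\<phi> ` carrier (H1 \<times>\<times> H2)))"
    let ?A = "\<phi> ` (carrier H1 \<times> {\<one>\<^bsub>H2\<^esub>})"
    let ?B = "\<phi> ` ({\<one>\<^bsub>H1\<^esub>} \<times> carrier H2)"
    let ?Im = "\<phi> ` carrier (H1 \<times>\<times> H2)"
    show "finite ?A \<or> finite ?B"
    proof (rule ccontr)
      assume nf: "\<not> (finite ?A \<or> finite ?B)"
      hence Ainf: "infinite ?A" and Binf: "infinite ?B" by auto
      interpret H1: group H1 by fact
      interpret H2: group H2 by fact
      have gP: "group (H1 \<times>\<times> H2)" using DirProd_group assms(3,4) by blast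
      have gh: "group_hom (H1 \<times>\<times> H2) G \<phi>"
        unfolding group_hom_def group_hom_axioms_def using gP grp hom by blast
      have Asub: "subgroup ?A G"
        using group_hom.subgroup_img_is_subgroup[OF gh DirProd_subgroups[OF assms(3) H1.subgroup_self assms(4) H2.triv_subgroup]] .
      have Bsub: "subgroup ?B G"
        using group_hom.subgroup_img_is_subgroup[OF gh DirProd_subgroups[OF assms(3) H1.triv_subgroup assms(4) H2.subgroup_self]] .
      have Imsub: "subgroup ?Im G" using group_hom.img_is_subgroup[OF gh] .
      have hm: "\<phi> (x \<otimes>\<^bsub>H1 \<times>\<times> H2\<^esub> y) = \<phi> x \<otimes> \<phi> y" if "x \<in> carrier (H1 \<times>\<times> H2)" "y \<in> carrier (H1 \<times>\<times> H2)" for x y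
        using group_hom.hom_mult[OF gh that] .
      have split: "\<phi> (h1, h2) = \<phi> (h1, \<one>\<^bsub>H2\<^esub>) \<otimes> \<phi> (\<one>\<^bsub>H1\<^esub>, h2)"
        "\<phi> (h1, h2) = \<phi> (\<one>\<^bsub>H1\<^esub>, h2) \<otimes> \<phi> (h1, \<one>\<^bsub>H2\<^esub>)"
        if h: "h1 \<in> carrier H1" "h2 \<in> carrier H2" for h1 h2
      proof -
        have c1: "(h1, \<one>\<^bsub>H2\<^esub>) \<in> carrier (H1 \<times>\<times> H2)" "(\<one>\<^bsub>H1\<^esub>, h2) \<in> carrier (H1 \<times>\<times> H2)"
          using h by simp_all
        have e1: "(h1, \<one>\<^bsub>H2\<^esub>) \<otimes>\<^bsub>H1 \<times>\<times> H2\<^esub> (\<one>\<^bsub>H1\<^esub>, h2) = (h1, h2)" using h by simp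
        have e2: "(\<one>\<^bsub>H1\<^esub>, h2) \<otimes>\<^bsub>H1 \<times>\<times> H2\<^esub> (h1, \<one>\<^bsub>H2\<^esub>) = (h1, h2)" using h by simp
        show "\<phi> (h1, h2) = \<phi> (h1, \<one>\<^bsub>H2\<^esub>) \<otimes> \<phi> (\<one>\<^bsub>H1\<^esub>, h2)"
          using hm[OF c1(1) c1(2)] unfolding e1 .
        show "\<phi> (h1, h2) = \<phi> (\<one>\<^bsub>H1\<^esub>, h2) \<otimes> \<phi> (h1, \<one>\<^bsub>H2\<^esub>)"
          using hm[OF c1(2) c1(1)] unfolding e2 .
      qed
      have comm: "a \<otimes> b = b \<otimes> a" if ab: "a \<in> ?A" "b \<in> ?B" for a b
      proof -
        obtain h1 where h1: "h1 \<in> carrier H1" "a = \<phi> (h1, \<one>\<^bsub>H2\<^esub>)" using ab(1) by blast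
        obtain h2 where h2: "h2 \<in> carrier H2" "b = \<phi> (\<one>\<^bsub>H1\<^esub>, h2)" using ab(2) by blast
        show ?thesis using split[OF h1(1) h2(1)] h1(2) h2(2) by simp
      qed
      have comm': "b \<otimes> a = a \<otimes> b" if "b \<in> ?B" "a \<in> ?A" for a b
        using comm[OF that(2,1)] by (rule sym)
      have Imdec: "\<exists>a\<in>?A. \<exists>b\<in>?B. x = a \<otimes> b" if x: "x \<in> ?Im" for x
      proof -
        obtain h1 h2 where h: "h1 \<in> carrier H1" "h2 \<in> carrier H2" "x = \<phi> (h1, h2)" using x by auto
        have "\<phi> (h1, \<one>\<^bsub>H2\<^esub>) \<in> ?A" "\<phi> (\<one>\<^bsub>H1\<^esub>, h2) \<in> ?B" using h by auto
        thus ?thesis using split(1)[OF h(1,2)] h(3) by blast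
      qed
      have AIm: "?A \<subseteq> ?Im" by auto
      let ?T = "crep ?Im ` carrier G"
      have Tfin: "finite ?T" using crep_finite[OF Imsub fin] .
      have Tc: "?T \<subseteq> carrier G" using crep_props[OF Imsub] by blast
      have dec: "\<exists>t\<in>?T. \<exists>a\<in>?A. \<exists>b\<in>?B. g = a \<otimes> b \<otimes> t" if g: "g \<in> carrier G" for g
      proof -
        let ?t = "crep ?Im g"
        have tc: "?t \<in> carrier G" using crep_props(2)[OF Imsub g] .
        obtain a b where ab: "a \<in> ?A" "b \<in> ?B" "g \<otimes> inv ?t = a \<otimes> b"
          using Imdec crep_props(3)[OF Imsub g] by blast
        have "g = (g \<otimes> inv ?t) \<otimes> ?t" using g tc by (simp add: m_assoc)
        hence "g = a \<otimes> b \<otimes> ?t" using ab by simp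
        thus ?thesis using ab g by blast
      qed
      have dec': "\<exists>t\<in>?T. \<exists>b\<in>?B. \<exists>a\<in>?A. g = b \<otimes> a \<otimes> t" if g: "g \<in> carrier G" for g
        using dec[OF g] comm by metis
      have Ac: "?A \<subseteq> carrier G" "?B \<subseteq> carrier G" using Asub Bsub subgroup.subset by blast+
      show False
      proof (cases "finite (?A \<inter> ?B)")
        case False
        have "finite (cayley_ends G S)"
        proof (rule C.finite_ends[of "?A \<inter> ?B"])
          show "?A \<inter> ?B \<subseteq> carrier G" using Ac by blast
          show "infinite (?A \<inter> ?B)" using False .
          fix K r c m assume "finite K" "K \<subseteq> carrier G" "cayley_ray G S r" "c \<in> ?A \<inter> ?B"
          thus "\<exists>n\<ge>m. \<exists>u. conn_avoiding G S K (r n) u \<and> conn_avoiding G S K u (c \<otimes> u)"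
            using C.core_central[OF Asub Bsub comm Tfin Tc dec] by blast
        qed
        thus False using S(4) by blast
      next
        case True
        obtain Sig where Sig: "finite Sig" "Sig \<subseteq> ?Im" "?Im \<subseteq> generate G Sig"
          using schreier[OF S(1,2,3) Imsub fin] by blast
        have "\<forall>\<sigma>\<in>Sig. \<exists>p. fst p \<in> ?A \<and> snd p \<in> ?B \<and> \<sigma> = fst p \<otimes> snd p"
        proof
          fix \<sigma> assume "\<sigma> \<in> Sig"
          hence "\<sigma> \<in> ?Im" using Sig(2) by blast
          then obtain a b where "a \<in> ?A" "b \<in> ?B" "\<sigma> = a \<otimes> b" using Imdec by blast
          thus "\<exists>p. fst p \<in> ?A \<and> snd p \<in> ?B \<and> \<sigma> = fst p \<otimes> snd p" by (intro exI[of _ "(a, b)"]) simp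
        qed
        from bchoice[OF this] obtain f where f: "\<forall>\<sigma>\<in>Sig. fst (f \<sigma>) \<in> ?A \<and> snd (f \<sigma>) \<in> ?B \<and> \<sigma> = fst (f \<sigma>) \<otimes> snd (f \<sigma>)"
          by blast
        define \<alpha> where "\<alpha> = (\<lambda>\<sigma>. fst (f \<sigma>))"
        define \<beta> where "\<beta> = (\<lambda>\<sigma>. snd (f \<sigma>))"
        have ab: "\<alpha> \<sigma> \<in> ?A \<and> \<beta> \<sigma> \<in> ?B \<and> \<sigma> = \<alpha> \<sigma> \<otimes> \<beta> \<sigma>" if "\<sigma> \<in> Sig" for \<sigma>
          using f that unfolding \<alpha>_def \<beta>_def by blast
        let ?A' = "generate G (\<alpha> ` Sig)"
        let ?B' = "generate G (\<beta> ` Sig)"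
        have aS: "\<alpha> ` Sig \<subseteq> ?A" and bS: "\<beta> ` Sig \<subseteq> ?B" using ab by auto
        have A'A: "?A' \<subseteq> ?A" using generate_subgroup_incl[OF aS Asub] .
        have B'B: "?B' \<subseteq> ?B" using generate_subgroup_incl[OF bS Bsub] .
        have gdec: "\<exists>a\<in>?A'. \<exists>b\<in>?B'. x = a \<otimes> b" if "x \<in> generate G Sig" for x
          using that
        proof (induction rule: generate.induct)
          case one
          show ?case using generate.one[of G] by (intro bexI) auto
        next
          case (incl \<sigma>)
          thus ?case using ab[OF incl] generate.incl[of _ "\<alpha> ` Sig" G] generate.incl[of _ "\<beta> ` Sig" G] by blast
        next
          case (inv \<sigma>)
          have 1: "\<alpha> \<sigma> \<in> ?A" "\<beta> \<sigma> \<in> ?B" "\<sigma> = \<alpha> \<sigma> \<otimes> \<beta> \<sigma>" using ab[OF inv] by auto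
          have c: "\<alpha> \<sigma> \<in> carrier G" "\<beta> \<sigma> \<in> carrier G" using 1 Ac by auto
          have "inv \<sigma> = inv (\<alpha> \<sigma> \<otimes> \<beta> \<sigma>)" using 1(3) by (rule arg_cong)
          also have "\<dots> = inv (\<beta> \<sigma>) \<otimes> inv (\<alpha> \<sigma>)" using c by (simp add: inv_mult_group)
          also have "\<dots> = inv (\<alpha> \<sigma>) \<otimes> inv (\<beta> \<sigma>)"
            using comm[of "inv (\<alpha> \<sigma>)" "inv (\<beta> \<sigma>)"] 1 Asub Bsub subgroup.m_inv_closed by metis
          finally show ?case using generate.inv[of "\<alpha> \<sigma>" "\<alpha> ` Sig" G] generate.inv[of "\<beta> \<sigma>" "\<beta> ` Sig" G] inv by blast
        next
          case (eng x y)
          obtain a1 b1 where 1: "a1 \<in> ?A'" "b1 \<in> ?B'" "x = a1 \<otimes> b1" using eng by blast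
          obtain a2 b2 where 2: "a2 \<in> ?A'" "b2 \<in> ?B'" "y = a2 \<otimes> b2" using eng by blast
          have c: "a1 \<in> carrier G" "b1 \<in> carrier G" "a2 \<in> carrier G" "b2 \<in> carrier G"
            using 1 2 A'A B'B Ac by auto
          have "a2 \<in> ?A" "b1 \<in> ?B" using 1 2 A'A B'B by auto
          hence "b1 \<otimes> a2 = a2 \<otimes> b1" using comm by (metis)
          hence e: "b1 \<otimes> a2 = a2 \<otimes> b1" .
          have "x \<otimes> y = a1 \<otimes> (b1 \<otimes> a2) \<otimes> b2" using 1 2 c by (simp add: m_assoc)
          also have "\<dots> = a1 \<otimes> (a2 \<otimes> b1) \<otimes> b2" using e by simp
          also have "\<dots> = (a1 \<otimes> a2) \<otimes> (b1 \<otimes> b2)" using c by (simp add: m_assoc)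
          finally have "x \<otimes> y = (a1 \<otimes> a2) \<otimes> (b1 \<otimes> b2)" .
          moreover have "a1 \<otimes> a2 \<in> ?A'" by (rule generate.eng[OF 1(1) 2(1)])
          moreover have "b1 \<otimes> b2 \<in> ?B'" by (rule generate.eng[OF 1(2) 2(2)])
          ultimately show ?case by blast
        qed
        have "infinite ?A' \<or> infinite ?B'"
        proof (rule ccontr)
          assume "\<not> (infinite ?A' \<or> infinite ?B')"
          hence f: "finite ((\<lambda>(a, b). a \<otimes> b) ` (?A' \<times> ?B'))" by auto
          have "?A \<subseteq> (\<lambda>(a, b). a \<otimes> b) ` (?A' \<times> ?B')"
          proof
            fix x assume "x \<in> ?A"
            hence "x \<in> generate G Sig" using AIm Sig(3) by blast
            then obtain a b where "a \<in> ?A'" "b \<in> ?B'" "x = a \<otimes> b" using gdec by blast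
            thus "x \<in> (\<lambda>(a, b). a \<otimes> b) ` (?A' \<times> ?B')" by force
          qed
          thus False using f Ainf finite_subset by blast
        qed
        moreover
        have "infinite ?B' \<Longrightarrow> finite (cayley_ends G S)"
        proof (rule C.finite_ends[of "?A"])
          assume inf: "infinite ?B'"
          show "?A \<subseteq> carrier G" using Ac by blast
          show "infinite ?A" using Ainf .
          fix K r c m assume "finite K" "K \<subseteq> carrier G" "cayley_ray G S r" "c \<in> ?A"
          thus "\<exists>n\<ge>m. \<exists>u. conn_avoiding G S K (r n) u \<and> conn_avoiding G S K u (c \<otimes> u)"
            using C.core_fin[OF Asub Bsub comm Tfin Tc dec True _ bS inf] Sig(1) by blast
        qed
        moreover
        have "infinite ?A' \<Longrightarrow> finite (cayley_ends G S)"
        proof (rule C.finite_ends[of "?B"])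
          assume inf: "infinite ?A'"
          show "?B \<subseteq> carrier G" using Ac by blast
          show "infinite ?B" using Binf .
          have Cf: "finite (?B \<inter> ?A)" using True by (simp add: Int_commute)
          fix K r c m assume "finite K" "K \<subseteq> carrier G" "cayley_ray G S r" "c \<in> ?B"
          thus "\<exists>n\<ge>m. \<exists>u. conn_avoiding G S K (r n) u \<and> conn_avoiding G S K u (c \<otimes> u)"
            using C.core_fin[OF Bsub Asub comm' Tfin Tc dec' Cf _ aS inf] Sig(1) by blast
        qed
        ultimately show False using S(4) by blast
      qed
    qed
  qed
  show ?thesis using infc npp by blast
qed

theorem proposition9p1:
  fixes G :: "('a, 'm) monoid_scheme"
    and H1 :: "('b, 'n) monoid_scheme" and H2 :: "('c, 'k) monoid_scheme"
  assumes "fin_gen_group G"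
    and "infinitely_many_ends G"
    and "group H1" and "group H2"
  shows "infinite (carrier G) \<and> no_product_presentation G H1 H2"
proof -
  have grp: "group G" using assms(1) unfolding fin_gen_group_def by blast
  show ?thesis using group.main_aux[OF grp _ assms(2,3,4)] by simp
qed



end
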